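(* Fix a time $t$, a horizon step $h\in\{1,\dots,H\}$, $\overline{\delta}\in(0,1)$ and $\alpha\in[0,1]$. Suppose $M_t$ obstacles are partitioned into a set $S_1$ of $M^1$ obstacles assigned to prediction model $P^1$ and a set $S_2$ of $M^2=M_t-M^1$ obstacles assigned to prediction model $P^2$. For each obstacle $k$ let $Y_k[t+h]\in\mathbb{R}^n$ be its (random) true position at time $t+h$, $\hat{Y}_k^{\phi(t,k)}[t+h\mid t]$ its predicted position under its assigned model $P^{\phi(t,k)}$, and $\epsilon^{\phi(t,k)}[t+h\mid t]>0$ the associated conformal radius; let $A_k=\{\|Y_k[t+h]-\hat{Y}_k^{\phi(t,k)}[t+h\mid t]\|\le \epsilon^{\phi(t,k)}[t+h\mid t]\}$ and suppose $\mathbb{P}(A_k)\ge 1-\overline{\delta}$ for every $k$. Assume the obstacles are non-interacting, i.e. the events $A_k$ ($k\in S_1\cup S_2$) are mutually independent. Let $X_k$ be the indicator of $A_k$. Then $$\mathbb{P}\Big(\bigcap_{k\in S_1}\{X_k=1\}\ \cap\ \Big\{\sum_{k\in S_2}X_k\ge \alpha M^2\Big\}\Big)\ \ge\ (1-\overline{\delta})^{M^1}\sum_{j=\lceil \alpha M^2\rceil}^{M^2}\binom{M^2}{j}(1-\overline{\delta})^j\,\overline{\delta}^{\,M^2-j}.$$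
   Context: An agent predicts the future trajectories of local obstacles using two prediction models $P^1$ (more accurate, slower) and $P^2$ (less accurate, faster); a routing function $\phi$ assigns each obstacle $k$ one of them, and the model outputs a predicted position $\hat{Y}_k^{\phi(t,k)}[t+h\mid t]$. The conformal radius is a positive number computed from calibration data. The parameter $\alpha$ is a "partial coverage" rate: only a fraction $\alpha$ of the $P^2$-routed obstacles is required to lie within their conformal radius. "Non-interacting obstacles" is used in the paper to mean that the coverage events of different obstacles are independent. *)

theory Defs
  imports "HOL-Probability.Probability"
begin

definition cover_event :: "'a measure \<Rightarrow> ('a \<Rightarrow> 'b::real_normed_vector) \<Rightarrow> 'b \<Rightarrow> real \<Rightarrow> 'a set" where
  "cover_event M Y Yhat eps = {\<omega> \<in> space M. norm (Y \<omega> - Yhat) \<le> eps}"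

end

theory Submission
  imports Defs
begin


definition Fs :: "nat set \<Rightarrow> (nat \<Rightarrow> real) \<Rightarrow> nat \<Rightarrow> real" where
  "Fs S p r = (\<Sum>T\<in>{T. T \<subseteq> S \<and> r \<le> card T}. (\<Prod>k\<in>T. p k) * (\<Prod>k\<in>S-T. 1 - p k))"

lemma Fs_rec:
  assumes "finite S" "a \<notin> S"
  shows "Fs (insert a S) p r = (1 - p a) * Fs S p r + p a * Fs S p (r - 1)"
proof -
  have split: "{T. T \<subseteq> insert a S \<and> r \<le> card T} =
     {T. T \<subseteq> S \<and> r \<le> card T} \<union> insert a ` {T. T \<subseteq> S \<and> r - 1 \<le> card T}"
  proof (rule set_eqI, rule iffI)
    fix T assume "T \<in> {T. T \<subseteq> insert a S \<and> r \<le> card T}"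
    then have T: "T \<subseteq> insert a S" "r \<le> card T" by auto
    show "T \<in> {T. T \<subseteq> S \<and> r \<le> card T} \<union> insert a ` {T. T \<subseteq> S \<and> r - 1 \<le> card T}"
    proof (cases "a \<in> T")
      case True
      have fin: "finite (T - {a})" using T assms(1) finite_subset by blast
      have "T = insert a (T - {a})" using True by auto
      moreover have "card T = Suc (card (T - {a}))" using True fin
        by (metis \<open>T = insert a (T - {a})\<close> card_insert_disjoint Diff_iff singletonI)
      ultimately show ?thesis using T
        by (intro UnI2 image_eqI[where x="T - {a}"]) auto
    next
      case False then show ?thesis using T by auto
    qed
  next
    fix T assume "T \<in> {T. T \<subseteq> S \<and> r \<le> card T} \<union> insert a ` {T. T \<subseteq> S \<and> r - 1 \<le> card T}"
    then show "T \<in> {T. T \<subseteq> insert a S \<and> r \<le> card T}"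
    proof
      assume "T \<in> insert a ` {T. T \<subseteq> S \<and> r - 1 \<le> card T}"
      then obtain U where U: "U \<subseteq> S" "r - 1 \<le> card U" "T = insert a U" by auto
      have "finite U" using U assms(1) finite_subset by blast
      moreover have "a \<notin> U" using U assms(2) by auto
      ultimately have "card T = Suc (card U)" using U by simp
      then show ?thesis using U by auto
    qed auto
  qed
  have fin1: "finite {T. T \<subseteq> S \<and> r \<le> card T}" using assms(1) by auto
  have fin2: "finite (insert a ` {T. T \<subseteq> S \<and> r - 1 \<le> card T})" using assms(1) by auto
  have disj: "{T. T \<subseteq> S \<and> r \<le> card T} \<inter> insert a ` {T. T \<subseteq> S \<and> r - 1 \<le> card T} = {}"
    using assms(2) by auto
  have inj: "inj_on (insert a) {T. T \<subseteq> S \<and> r - 1 \<le> card T}"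
    apply (rule inj_onI) by (metis Diff_insert_absorb mem_Collect_eq subsetD assms(2))
  have s1: "(\<Sum>T\<in>{T. T \<subseteq> S \<and> r \<le> card T}. (\<Prod>k\<in>T. p k) * (\<Prod>k\<in>insert a S-T. 1 - p k))
      = (1 - p a) * Fs S p r"
    unfolding Fs_def sum_distrib_left
  proof (rule sum.cong[OF refl])
    fix T assume "T \<in> {T. T \<subseteq> S \<and> r \<le> card T}"
    then have "insert a S - T = insert a (S - T)" "a \<notin> S - T" using assms(2) by auto
    then show "(\<Prod>k\<in>T. p k) * (\<Prod>k\<in>insert a S-T. 1 - p k) = (1 - p a) * ((\<Prod>k\<in>T. p k) * (\<Prod>k\<in>S-T. 1 - p k))"
      using assms(1) by simp
  qed
  have s2: "(\<Sum>T\<in>insert a ` {T. T \<subseteq> S \<and> r - 1 \<le> card T}. (\<Prod>k\<in>T. p k) * (\<Prod>k\<in>insert a S-T. 1 - p k))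
      = p a * Fs S p (r - 1)"
    unfolding Fs_def sum_distrib_left sum.reindex[OF inj] o_def
  proof (rule sum.cong[OF refl])
    fix T assume T: "T \<in> {T. T \<subseteq> S \<and> r - 1 \<le> card T}"
    then have "insert a S - insert a T = S - T" "a \<notin> T" "finite T" using assms finite_subset by auto
    then show "(\<Prod>k\<in>insert a T. p k) * (\<Prod>k\<in>insert a S - insert a T. 1 - p k) = p a * ((\<Prod>k\<in>T. p k) * (\<Prod>k\<in>S-T. 1 - p k))"
      by simp
  qed
  show ?thesis
    unfolding Fs_def[of "insert a S"] split sum.union_disjoint[OF fin1 fin2 disj] s1 s2 ..
qed

lemma Fs_nonneg_term:
  fixes p :: "nat \<Rightarrow> real"
  assumes "\<And>k. k \<in> S \<Longrightarrow> 0 \<le> p k \<and> p k \<le> 1" "T \<subseteq> S"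
  shows "0 \<le> (\<Prod>k\<in>T. p k) * (\<Prod>k\<in>S-T. 1 - p k)"
  by (intro mult_nonneg_nonneg prod_nonneg ballI) (use assms in auto)

lemma Fs_nonneg:
  assumes "\<And>k. k \<in> S \<Longrightarrow> 0 \<le> p k \<and> p k \<le> 1"
  shows "0 \<le> Fs S p r"
  unfolding Fs_def using Fs_nonneg_term[OF assms] by (intro sum_nonneg) auto

lemma Fs_mono_r:
  assumes "finite S" "\<And>k. k \<in> S \<Longrightarrow> 0 \<le> p k \<and> p k \<le> 1" "r' \<le> r"
  shows "Fs S p r \<le> Fs S p r'"
  unfolding Fs_def
  apply (rule sum_mono2)
  using assms Fs_nonneg_term[OF assms(2)] by auto

lemma Fs_ge:
  assumes "finite S" "\<And>k. k \<in> S \<Longrightarrow> q \<le> p k \<and> p k \<le> 1" "0 \<le> q" "q \<le> 1"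
  shows "Fs S (\<lambda>_. q) r \<le> Fs S p r"
  using assms
proof (induction S arbitrary: r rule: finite_induct)
  case empty
  then show ?case by (simp add: Fs_def)
next
  case (insert a S)
  have pS: "\<And>k. k \<in> S \<Longrightarrow> 0 \<le> p k \<and> p k \<le> 1" using insert.prems by force
  have pa: "q \<le> p a" "p a \<le> 1" using insert.prems by auto
  have IH1: "Fs S (\<lambda>_. q) r \<le> Fs S p r" and IH2: "Fs S (\<lambda>_. q) (r - 1) \<le> Fs S p (r - 1)"
    using insert.IH insert.prems by auto
  have mono: "Fs S p r \<le> Fs S p (r - 1)" using Fs_mono_r[OF insert.hyps(1) pS] by auto
  have "Fs (insert a S) (\<lambda>_. q) r = (1 - q) * Fs S (\<lambda>_. q) r + q * Fs S (\<lambda>_. q) (r - 1)"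
    using Fs_rec[OF insert.hyps] by simp
  also have "\<dots> \<le> (1 - q) * Fs S p r + q * Fs S p (r - 1)"
    using IH1 IH2 insert.prems by (intro add_mono mult_left_mono) auto
  also have "\<dots> = Fs S p r + q * (Fs S p (r - 1) - Fs S p r)" by algebra
  also have "\<dots> \<le> Fs S p r + p a * (Fs S p (r - 1) - Fs S p r)"
    using mono pa by (intro add_left_mono mult_right_mono) auto
  also have "\<dots> = (1 - p a) * Fs S p r + p a * Fs S p (r - 1)" by algebra
  also have "\<dots> = Fs (insert a S) p r" using Fs_rec[OF insert.hyps] by simp
  finally show ?case .
qed

lemma Fs_const:
  assumes "finite S"
  shows "Fs S (\<lambda>_. q) r = (\<Sum>j = r..card S. real (card S choose j) * q ^ j * (1 - q) ^ (card S - j))"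
proof -
  have eq: "{T. T \<subseteq> S \<and> r \<le> card T} = (\<Union>j\<in>{r..card S}. {T. T \<subseteq> S \<and> card T = j})"
    using assms card_mono by fastforce
  have "Fs S (\<lambda>_. q) r = (\<Sum>T\<in>{T. T \<subseteq> S \<and> r \<le> card T}. q ^ card T * (1 - q) ^ (card S - card T))"
    unfolding Fs_def
    by (rule sum.cong[OF refl]) (use assms in \<open>auto simp: card_Diff_subset finite_subset\<close>)
  also have "\<dots> = (\<Sum>j\<in>{r..card S}. \<Sum>T\<in>{T. T \<subseteq> S \<and> card T = j}. q ^ card T * (1 - q) ^ (card S - card T))"
    unfolding eq
    by (rule sum.UNION_disjoint) (use assms in auto)
  also have "\<dots> = (\<Sum>j = r..card S. real (card S choose j) * q ^ j * (1 - q) ^ (card S - j))"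
  proof (rule sum.cong[OF refl])
    fix j
    have "(\<Sum>T\<in>{T. T \<subseteq> S \<and> card T = j}. q ^ card T * (1 - q) ^ (card S - card T))
        = (\<Sum>T\<in>{T. T \<subseteq> S \<and> card T = j}. q ^ j * (1 - q) ^ (card S - j))" by simp
    also have "\<dots> = real (card S choose j) * q ^ j * (1 - q) ^ (card S - j)"
      using n_subsets[OF assms, of j] by simp
    finally show "(\<Sum>T\<in>{T. T \<subseteq> S \<and> card T = j}. q ^ card T * (1 - q) ^ (card S - card T))
        = real (card S choose j) * q ^ j * (1 - q) ^ (card S - j)" .
  qed
  finally show ?thesis .
qed



theorem lemma4:
  fixes M :: "'a measure"
    and S1 S2 :: "nat set"
    and Y :: "nat \<Rightarrow> 'a \<Rightarrow> real ^ 'n"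
    and Yhat :: "nat \<Rightarrow> real ^ 'n"
    and eps :: "nat \<Rightarrow> real"
    and \<delta> \<alpha> :: real
  assumes "prob_space M"
    and "finite S1" and "finite S2" and "S1 \<inter> S2 = {}"
    and "0 < \<delta>" and "\<delta> < 1"
    and "0 \<le> \<alpha>" and "\<alpha> \<le> 1"
    and "\<And>k. k \<in> S1 \<union> S2 \<Longrightarrow> Y k \<in> borel_measurable M"
    and "\<And>k. k \<in> S1 \<union> S2 \<Longrightarrow> eps k > 0"
    and "\<And>k. k \<in> S1 \<union> S2 \<Longrightarrow>
           measure M (cover_event M (Y k) (Yhat k) (eps k)) \<ge> 1 - \<delta>"
    and "prob_space.indep_events M (\<lambda>k. cover_event M (Y k) (Yhat k) (eps k)) (S1 \<union> S2)"
  shows "measure M ((\<Inter>k\<in>S1. {\<omega> \<in> space M.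
              indicator (cover_event M (Y k) (Yhat k) (eps k)) \<omega> = (1::real)})
           \<inter> {\<omega> \<in> space M. (\<Sum>k\<in>S2. indicator (cover_event M (Y k) (Yhat k) (eps k)) \<omega>)
                 \<ge> \<alpha> * real (card S2)})
         \<ge> (1 - \<delta>) ^ card S1 *
           (\<Sum>j = nat \<lceil>\<alpha> * real (card S2)\<rceil>..card S2.
              real (card S2 choose j) * (1 - \<delta>) ^ j * \<delta> ^ (card S2 - j))"
  proof -
  interpret prob_space M by fact
  define A where "A k = cover_event M (Y k) (Yhat k) (eps k)" for k
  define I where "I = S1 \<union> S2"
  define m where "m = card S2"
  define r where "r = nat \<lceil>\<alpha> * real m\<rceil>"
  define q where "q = 1 - \<delta>"
  define p where "p k = prob (A k)" for k
  define Tset where "Tset = {T. T \<subseteq> S2 \<and> r \<le> card T}"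
  define B where "B T k = (if k \<in> S1 \<union> T then A k else space M - A k)" for T k
  define E where "E T = {\<omega> \<in> space M. (\<forall>k\<in>S1. \<omega> \<in> A k) \<and> {k\<in>S2. \<omega> \<in> A k} = T}" for T
  have ind: "indep_events A I" using assms(12) unfolding A_def I_def by simp
  have finI: "finite I" using assms(2,3) I_def by auto
  have Aev: "A k \<in> events" if "k \<in> I" for k
    using ind that unfolding indep_events_def by auto
  have Asp: "A k \<subseteq> space M" for k unfolding A_def cover_event_def by auto
  have indS: "indep_sets (\<lambda>k. sigma_sets (space M) {A k}) I"
    using indep_sets_sigma[OF ind[unfolded indep_events_def_alt]]
    by (auto simp: Int_stable_def)
  have Bin: "B T k \<in> sigma_sets (space M) {A k}" for T k
    unfolding B_def using Asp by (auto intro: sigma_sets.Basic sigma_sets.Compl)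
  have sumind: "(\<Sum>k\<in>S2. indicator (A k) \<omega>) = real (card {k\<in>S2. \<omega> \<in> A k})" for \<omega>
  proof -
    have "(\<Sum>k\<in>S2. indicator (A k) \<omega> :: real) = (\<Sum>k\<in>S2. if \<omega> \<in> A k then 1 else 0)"
      by (intro sum.cong) (auto simp: indicator_def)
    also have "\<dots> = real (card {k\<in>S2. \<omega> \<in> A k})"
      using assms(3) by (simp add: sum.If_cases Int_def)
    finally show ?thesis .
  qed
  have evt: "((\<Inter>k\<in>S1. {\<omega> \<in> space M.
              indicator (cover_event M (Y k) (Yhat k) (eps k)) \<omega> = (1::real)})
           \<inter> {\<omega> \<in> space M. (\<Sum>k\<in>S2. indicator (cover_event M (Y k) (Yhat k) (eps k)) \<omega>)
                 \<ge> \<alpha> * real (card S2)}) = (\<Union>T\<in>Tset. E T)"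
    unfolding A_def[symmetric] m_def[symmetric] sumind
    by (auto simp: E_def Tset_def r_def nat_ceiling_le_eq indicator_def)
  have ET: "E T = space M \<inter> (\<Inter>k\<in>I. B T k)" if "T \<in> Tset" for T
  proof (rule set_eqI)
    fix x
    have "x \<in> (\<Inter>k\<in>I. B T k) \<longleftrightarrow> (\<forall>k\<in>I. x \<in> B T k)" by blast
    also have "\<dots> \<longleftrightarrow> (\<forall>k\<in>I. (k \<in> S1 \<union> T \<longrightarrow> x \<in> A k) \<and> (k \<notin> S1 \<union> T \<longrightarrow> x \<in> space M - A k))"
      unfolding B_def by auto
    finally show "x \<in> E T \<longleftrightarrow> x \<in> space M \<inter> (\<Inter>k\<in>I. B T k)"
      using that assms(4) unfolding E_def Tset_def I_def by auto
  qed
  have probE: "prob (E T) = (\<Prod>k\<in>S1. p k) * ((\<Prod>k\<in>T. p k) * (\<Prod>k\<in>S2-T. 1 - p k))"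
    if T: "T \<in> Tset" for T
  proof -
    have "prob (E T) = (\<Prod>k\<in>I. prob (B T k))"
    proof (cases "I = {}")
      case True
      then show ?thesis using ET[OF T] by (simp add: prob_space)
    next
      case False
      obtain k0 where k0: "k0 \<in> I" using False by blast
      have "(\<Inter>k\<in>I. B T k) \<subseteq> B T k0" using k0 by blast
      moreover have "B T k0 \<subseteq> space M" using Asp unfolding B_def by auto
      ultimately have "space M \<inter> (\<Inter>k\<in>I. B T k) = (\<Inter>k\<in>I. B T k)" by blast
      then show ?thesis using ET[OF T] indep_setsD[OF indS order_refl False finI] Bin by auto
    qed
    also have "\<dots> = (\<Prod>k\<in>I. if k \<in> S1 \<union> T then p k else 1 - p k)"
      using Aev unfolding B_def p_def by (intro prod.cong refl) (auto simp: prob_compl)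
    also have "\<dots> = (\<Prod>k\<in>S1. if k \<in> S1 \<union> T then p k else 1 - p k) *
                    (\<Prod>k\<in>S2. if k \<in> S1 \<union> T then p k else 1 - p k)"
      unfolding I_def using assms(2,3,4) by (rule prod.union_disjoint)
    also have "(\<Prod>k\<in>S1. if k \<in> S1 \<union> T then p k else 1 - p k) = (\<Prod>k\<in>S1. p k)" by simp
    also have "(\<Prod>k\<in>S2. if k \<in> S1 \<union> T then p k else 1 - p k) =
        (\<Prod>k\<in>S2. if k \<in> T then p k else 1 - p k)"
      using assms(4) by (intro prod.cong refl) auto
    also have "\<dots> = (\<Prod>k\<in>T. p k) * (\<Prod>k\<in>S2-T. 1 - p k)"
      using T assms(3) unfolding Tset_def by (simp add: prod.If_cases Int_absorb1 Diff_eq)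
    finally show ?thesis .
  qed
  have finT: "finite Tset" using assms(3) unfolding Tset_def by auto
  have disj: "disjoint_family_on E Tset"
    unfolding disjoint_family_on_def E_def by auto
  have Eev: "E ` Tset \<subseteq> events"
  proof -
    have "E T \<in> events" if "T \<in> Tset" for T
    proof -
      have "B T k \<in> events" if "k \<in> I" for k
        using Aev[OF that] unfolding B_def by auto
      then show ?thesis unfolding ET[OF that] using finI
        by (cases "I = {}") (auto intro!: sets.Int sets.finite_INT)
    qed
    then show ?thesis by auto
  qed
  have "prob (\<Union>T\<in>Tset. E T) = (\<Sum>T\<in>Tset. prob (E T))"
    by (rule finite_measure_finite_Union[OF finT Eev disj])
  also have "\<dots> = (\<Prod>k\<in>S1. p k) * Fs S2 p r"
    unfolding Fs_def Tset_def[symmetric] sum_distrib_left using probE by simp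
  finally have main: "prob (\<Union>T\<in>Tset. E T) = (\<Prod>k\<in>S1. p k) * Fs S2 p r" .
  have pq: "q \<le> p k \<and> p k \<le> 1" if "k \<in> I" for k
    using assms(11)[of k] that unfolding p_def q_def A_def I_def by auto
  have q01: "0 \<le> q" "q \<le> 1" using assms(5,6) q_def by auto
  have "(1 - \<delta>) ^ card S1 * (\<Sum>j = r..m. real (m choose j) * (1 - \<delta>) ^ j * \<delta> ^ (m - j))
      = q ^ card S1 * Fs S2 (\<lambda>_. q) r"
    using Fs_const[OF assms(3), of q r] unfolding m_def q_def by simp
  also have "\<dots> \<le> (\<Prod>k\<in>S1. p k) * Fs S2 p r"
  proof (rule mult_mono)
    show "q ^ card S1 \<le> (\<Prod>k\<in>S1. p k)"
      using prod_mono[of S1 "\<lambda>_. q" p] pq q01 unfolding I_def by auto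
    show "Fs S2 (\<lambda>_. q) r \<le> Fs S2 p r"
      using Fs_ge[OF assms(3) _ q01] pq unfolding I_def by auto
    show "0 \<le> (\<Prod>k\<in>S1. p k)" using pq q01 unfolding I_def by (intro prod_nonneg) force
    show "0 \<le> Fs S2 (\<lambda>_. q) r" using q01 by (intro Fs_nonneg) auto
  qed
  finally show ?thesis unfolding evt main m_def r_def .
qed

end
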